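(* Let $(X,\kappa)$ be a finite digital image with simplicial Euler characteristic $\chi(X)\neq 0$, and let $f:X\to X$ be a continuous map strongly homotopic to the identity $\mathrm{id}_X$. Then $f$ has a fixed point or at least two approximate fixed points.
   Context: A digital image is a pair $(X,\kappa)$ where $X$ is a set and $\kappa$ is a symmetric irreflexive relation on $X$ (the adjacency). Write $x\leftrightarrow y$ if adjacent, $x\Leftrightarrow y$ if adjacent or equal. A map $f$ is continuous if $x\leftrightarrow y$ implies $f(x)\Leftrightarrow f(y)$. A point $x$ is an approximate fixed point of $f:X\to X$ if $f(x)\Leftrightarrow x$. The digital interval $[0,m]_{\mathbb Z}$ has consecutive integers adjacent. Continuous $f,g:X\to Y$ are strongly homotopic ($f\simeq^* g$) if there exist $m\ge1$ and $H:X\times[0,m]_{\mathbb Z}\to Y$ with $H(\cdot,0)=f$, $H(\cdot,m)=g$, such that whenever $(x,t)\neq(x',t')$, $x\Leftrightarrow x'$ and $|t-t'|\le1$, we have $H(x,t)\Leftrightarrow H(x',t')$. Simplicial homology: a $q$-simplex of $X$ is a set of $q+1$ pairwise adjacent points. $C_q(X)$ is the free abelian group generated by ordered $q$-simplices $\langle x_0,\dots,x_q\rangle$ modulo $\langle x_{\rho(0)},\dots,x_{\rho(q)}\rangle=\operatorname{sgn}(\rho)\langle x_0,\dots,x_q\rangle$, with boundary $\partial\langle x_0,\dots,x_q\rangle=\sum_{i=0}^q(-1)^i\langle x_0,\dots,\widehat{x_i},\dots,x_q\rangle$; $H_q(X)$ is its homology. The simplicial Euler characteristic is $\chi(X)=\sum_{q\ge0}(-1)^q\operatorname{rank}H_q(X)$.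 *)

theory Defs
  imports "HOL-Algebra.Free_Abelian_Groups" "HOL-Combinatorics.Permutations"
begin

definition digital_image :: "'a set \<Rightarrow> ('a \<Rightarrow> 'a \<Rightarrow> bool) \<Rightarrow> bool" where
  "digital_image X adj \<longleftrightarrow>
     (\<forall>x\<in>X. \<forall>y\<in>X. adj x y \<longrightarrow> adj y x) \<and> (\<forall>x\<in>X. \<not> adj x x)"

definition adjeq :: "('a \<Rightarrow> 'a \<Rightarrow> bool) \<Rightarrow> 'a \<Rightarrow> 'a \<Rightarrow> bool" where
  "adjeq adj x y \<longleftrightarrow> adj x y \<or> x = y"

definition digitally_continuous ::
  "'a set \<Rightarrow> ('a \<Rightarrow> 'a \<Rightarrow> bool) \<Rightarrow> 'b set \<Rightarrow> ('b \<Rightarrow> 'b \<Rightarrow> bool) \<Rightarrow> ('a \<Rightarrow> 'b) \<Rightarrow> bool" where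
  "digitally_continuous X adj Y adjY f \<longleftrightarrow>
     (\<forall>x\<in>X. f x \<in> Y) \<and> (\<forall>x\<in>X. \<forall>y\<in>X. adj x y \<longrightarrow> adjeq adjY (f x) (f y))"

definition approx_fixed_point :: "('a \<Rightarrow> 'a \<Rightarrow> bool) \<Rightarrow> ('a \<Rightarrow> 'a) \<Rightarrow> 'a \<Rightarrow> bool" where
  "approx_fixed_point adj f x \<longleftrightarrow> adjeq adj (f x) x"

text \<open>Strong homotopy; the time parameter ranges over the digital interval [0,m]
  (consecutive integers adjacent), represented by naturals t \<le> m.\<close>
definition strongly_homotopic ::
  "'a set \<Rightarrow> ('a \<Rightarrow> 'a \<Rightarrow> bool) \<Rightarrow> 'b set \<Rightarrow> ('b \<Rightarrow> 'b \<Rightarrow> bool)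
     \<Rightarrow> ('a \<Rightarrow> 'b) \<Rightarrow> ('a \<Rightarrow> 'b) \<Rightarrow> bool" where
  "strongly_homotopic X adj Y adjY f g \<longleftrightarrow>
     (\<exists>m::nat. m \<ge> 1 \<and> (\<exists>H :: 'a \<Rightarrow> nat \<Rightarrow> 'b.
        (\<forall>x\<in>X. \<forall>t\<le>m. H x t \<in> Y) \<and>
        (\<forall>x\<in>X. H x 0 = f x \<and> H x m = g x) \<and>
        (\<forall>x\<in>X. \<forall>x'\<in>X. \<forall>t\<le>m. \<forall>t'\<le>m.
            (x, t) \<noteq> (x', t') \<and> adjeq adj x x' \<and> t \<le> Suc t' \<and> t' \<le> Suc t
            \<longrightarrow> adjeq adjY (H x t) (H x' t'))))"

definition osimplices :: "'a set \<Rightarrow> ('a \<Rightarrow> 'a \<Rightarrow> bool) \<Rightarrow> nat \<Rightarrow> 'a list set" where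
  "osimplices X adj q = {xs. length xs = Suc q \<and> distinct xs \<and> set xs \<subseteq> X \<and>
      (\<forall>i<Suc q. \<forall>j<Suc q. i \<noteq> j \<longrightarrow> adj (xs ! i) (xs ! j))}"

definition free_chains :: "'a set \<Rightarrow> ('a \<Rightarrow> 'a \<Rightarrow> bool) \<Rightarrow> nat \<Rightarrow> ('a list \<Rightarrow>\<^sub>0 int) monoid" where
  "free_chains X adj q = free_Abelian_group (osimplices X adj q)"

definition orient_rels :: "'a set \<Rightarrow> ('a \<Rightarrow> 'a \<Rightarrow> bool) \<Rightarrow> nat \<Rightarrow> ('a list \<Rightarrow>\<^sub>0 int) set" where
  "orient_rels X adj q =
     {frag_of (map (\<lambda>i. xs ! \<rho> i) [0..<Suc q]) - frag_cmul (sign \<rho>) (frag_of xs) | xs \<rho>.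
        xs \<in> osimplices X adj q \<and> \<rho> permutes {..q}}"

definition orient_subgroup :: "'a set \<Rightarrow> ('a \<Rightarrow> 'a \<Rightarrow> bool) \<Rightarrow> nat \<Rightarrow> ('a list \<Rightarrow>\<^sub>0 int) set" where
  "orient_subgroup X adj q = generate (free_chains X adj q) (orient_rels X adj q)"

definition chain_group :: "'a set \<Rightarrow> ('a \<Rightarrow> 'a \<Rightarrow> bool) \<Rightarrow> nat \<Rightarrow> ('a list \<Rightarrow>\<^sub>0 int) set monoid" where
  "chain_group X adj q = free_chains X adj q Mod orient_subgroup X adj q"

definition remove_nth :: "nat \<Rightarrow> 'a list \<Rightarrow> 'a list" where
  "remove_nth i xs = take i xs @ drop (Suc i) xs"

definition free_boundary :: "nat \<Rightarrow> ('a list \<Rightarrow>\<^sub>0 int) \<Rightarrow> ('a list \<Rightarrow>\<^sub>0 int)" where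
  "free_boundary q c =
     frag_extend (\<lambda>xs. \<Sum>i\<le>q. frag_cmul ((-1) ^ i) (frag_of (remove_nth i xs))) c"

definition chain_boundary :: "'a set \<Rightarrow> ('a \<Rightarrow> 'a \<Rightarrow> bool) \<Rightarrow> nat
     \<Rightarrow> ('a list \<Rightarrow>\<^sub>0 int) set \<Rightarrow> ('a list \<Rightarrow>\<^sub>0 int) set" where
  "chain_boundary X adj q A =
     orient_subgroup X adj q #>\<^bsub>free_chains X adj q\<^esub> free_boundary (Suc q) (SOME c. c \<in> A)"

definition cycles :: "'a set \<Rightarrow> ('a \<Rightarrow> 'a \<Rightarrow> bool) \<Rightarrow> nat \<Rightarrow> ('a list \<Rightarrow>\<^sub>0 int) set set" where
  "cycles X adj q =
     (case q of 0 \<Rightarrow> carrier (chain_group X adj 0)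
      | Suc p \<Rightarrow> {A \<in> carrier (chain_group X adj (Suc p)).
                    chain_boundary X adj p A = \<one>\<^bsub>chain_group X adj p\<^esub>})"

definition boundaries :: "'a set \<Rightarrow> ('a \<Rightarrow> 'a \<Rightarrow> bool) \<Rightarrow> nat \<Rightarrow> ('a list \<Rightarrow>\<^sub>0 int) set set" where
  "boundaries X adj q = chain_boundary X adj q ` carrier (chain_group X adj (Suc q))"

definition simplicial_homology ::
  "'a set \<Rightarrow> ('a \<Rightarrow> 'a \<Rightarrow> bool) \<Rightarrow> nat \<Rightarrow> ('a list \<Rightarrow>\<^sub>0 int) set set monoid" where
  "simplicial_homology X adj q =
     subgroup_generated (chain_group X adj q) (cycles X adj q) Mod boundaries X adj q"

definition ab_independent :: "('g, 'm) monoid_scheme \<Rightarrow> 'g set \<Rightarrow> bool" where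
  "ab_independent G S \<longleftrightarrow> S \<subseteq> carrier G \<and> finite S \<and>
     (\<forall>n :: 'g \<Rightarrow> int. finprod G (\<lambda>x. x [^]\<^bsub>G\<^esub> n x) S = \<one>\<^bsub>G\<^esub> \<longrightarrow> (\<forall>x\<in>S. n x = 0))"

definition ab_rank :: "('g, 'm) monoid_scheme \<Rightarrow> nat" where
  "ab_rank G = Sup {card S | S. ab_independent G S}"

text \<open>Simplicial Euler characteristic; for finite X, H_q = 0 for q \<ge> card X,
  so the sum over q \<le> card X is the full alternating sum.\<close>
definition simplicial_euler_char :: "'a set \<Rightarrow> ('a \<Rightarrow> 'a \<Rightarrow> bool) \<Rightarrow> int" where
  "simplicial_euler_char X adj =
     (\<Sum>q\<le>card X. (-1) ^ q * int (ab_rank (simplicial_homology X adj q)))"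

end

theory Submission
  imports Defs
begin


definition nb :: "'a set \<Rightarrow> ('a \<Rightarrow> 'a \<Rightarrow> bool) \<Rightarrow> 'a \<Rightarrow> 'a set" where
  "nb Y adj x = {u\<in>Y. adjeq adj x u}"

lemma adjeq_sym: "\<forall>x\<in>Y. \<forall>y\<in>Y. adj x y \<longrightarrow> adj y x \<Longrightarrow> x \<in> Y \<Longrightarrow> y \<in> Y \<Longrightarrow> adjeq adj x y \<Longrightarrow> adjeq adj y x"
  unfolding adjeq_def by auto

lemma stiff_case:
  assumes sym: "\<forall>x\<in>Y. \<forall>y\<in>Y. adj x y \<longrightarrow> adj y x"
  and stiff: "\<forall>v\<in>Y. \<forall>w\<in>Y. \<not> nb Y adj v \<subset> nb Y adj w"
  and HY: "\<forall>x\<in>Y. \<forall>t\<le>m. H x t \<in> Y"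
  and Hm: "\<forall>x\<in>Y. H x m = x"
  and Hs: "\<forall>x\<in>Y. \<forall>x'\<in>Y. \<forall>t\<le>m. \<forall>t'\<le>m. (x,t)\<noteq>(x',t') \<and> adjeq adj x x' \<and> t \<le> Suc t' \<and> t' \<le> Suc t \<longrightarrow> adjeq adj (H x t) (H x' t')"
  shows "\<forall>x\<in>Y. nb Y adj x \<subseteq> nb Y adj (H x (m - j))"
proof (induction j)
  case 0
  then show ?case using Hm by simp
next
  case (Suc j)
  show ?case
  proof (cases "m - Suc j = m - j")
    case True then show ?thesis using Suc by simp
  next
    case False
    define t where "t = m - Suc j"
    have tt: "m - j = Suc t" "t \<le> m" "Suc t \<le> m" using False unfolding t_def by auto
    show ?thesis
    proof (intro ballI subsetI)
      fix x u assume x: "x \<in> Y" and u: "u \<in> nb Y adj x"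
      have uY: "u \<in> Y" and xu: "adjeq adj x u" using u unfolding nb_def by auto
      have 1: "adjeq adj (H x t) (H u (Suc t))"
        using Hs x uY tt xu by auto
      have "nb Y adj u \<subseteq> nb Y adj (H u (Suc t))" using Suc uY tt by metis
      moreover have "H u (Suc t) \<in> Y" using HY uY tt by auto
      ultimately have eq: "nb Y adj u = nb Y adj (H u (Suc t))" using stiff uY by blast
      have HxY: "H x t \<in> Y" using HY x tt by auto
      have "H x t \<in> nb Y adj (H u (Suc t))"
        unfolding nb_def using adjeq_sym[OF sym _ _ 1] HxY \<open>H u (Suc t) \<in> Y\<close> by auto
      then have "adjeq adj u (H x t)" using eq unfolding nb_def by auto
      then have "adjeq adj (H x t) u" using adjeq_sym[OF sym] uY HxY by blast
      then show "u \<in> nb Y adj (H x (m - Suc j))" unfolding nb_def t_def[symmetric] using uY by auto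
    qed
  qed
qed

lemma nb_refl: "x \<in> Y \<Longrightarrow> x \<in> nb Y adj x" unfolding nb_def adjeq_def by auto

lemma exists_max_dom:
  assumes "finite Y" "v \<in> Y"
  shows "\<exists>w\<in>Y. nb Y adj v \<subseteq> nb Y adj w \<and> (\<forall>w'\<in>Y. \<not> nb Y adj w \<subset> nb Y adj w')"
proof -
  define D where "D = {w\<in>Y. nb Y adj v \<subseteq> nb Y adj w}"
  have fD: "finite D" "v \<in> D" using assms unfolding D_def by auto
  define M where "M = Max ((\<lambda>w. card (nb Y adj w)) ` D)"
  have "M \<in> (\<lambda>w. card (nb Y adj w)) ` D" unfolding M_def by (rule Max_in) (use fD in auto)
  then obtain w where w1: "w \<in> D" "card (nb Y adj w) = M" by auto
  have w2: "card (nb Y adj w') \<le> card (nb Y adj w)" if "w' \<in> D" for w'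
    unfolding w1(2) M_def by (rule Max_ge) (use fD that in auto)
  note w = w1(1) w2
  have "\<forall>w'\<in>Y. \<not> nb Y adj w \<subset> nb Y adj w'"
  proof (intro ballI notI)
    fix w' assume "w' \<in> Y" "nb Y adj w \<subset> nb Y adj w'"
    then have "w' \<in> D" using w(1) unfolding D_def by auto
    moreover have "card (nb Y adj w) < card (nb Y adj w')"
      by (rule psubset_card_mono) (use \<open>nb Y adj w \<subset> nb Y adj w'\<close> assms(1) in \<open>auto simp: nb_def\<close>)
    ultimately show False using w(2) by fastforce
  qed
  then show ?thesis using w(1) unfolding D_def by auto
qed

lemma autom_approx:
  assumes "finite Y" "Y \<noteq> {}"
  and "\<forall>x\<in>Y. \<forall>y\<in>Y. adj x y \<longrightarrow> adj y x"
  and "\<forall>x\<in>Y. p x \<in> Y" and "inj_on p Y"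
  and "\<forall>x\<in>Y. \<forall>y\<in>Y. adj (p x) (p y) \<longleftrightarrow> adj x y"
  and "\<forall>x\<in>Y. \<forall>t\<le>m. H x t \<in> Y"
  and "\<forall>x\<in>Y. H x 0 = p x" and "\<forall>x\<in>Y. H x m = x"
  and "\<forall>x\<in>Y. \<forall>x'\<in>Y. \<forall>t\<le>m. \<forall>t'\<le>m. (x,t)\<noteq>(x',t') \<and> adjeq adj x x' \<and> t \<le> Suc t' \<and> t' \<le> Suc t \<longrightarrow> adjeq adj (H x t) (H x' t')"
  shows "\<exists>x\<in>Y. adjeq adj (p x) x"
  using assms
proof (induction "card Y" arbitrary: Y H rule: less_induct)
  case less
  note fin = less.prems(1) and ne = less.prems(2) and sym = less.prems(3) and pY = less.prems(4)
    and inj = less.prems(5) and padj = less.prems(6) and HY = less.prems(7) and H0 = less.prems(8)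
    and Hm = less.prems(9) and Hs = less.prems(10)
  define S where "S = {v\<in>Y. \<exists>w\<in>Y. nb Y adj v \<subset> nb Y adj w}"
  show ?case
  proof (cases "S = {}")
    case True
    then have stiff: "\<forall>v\<in>Y. \<forall>w\<in>Y. \<not> nb Y adj v \<subset> nb Y adj w" unfolding S_def by auto
    obtain x where x: "x \<in> Y" using ne by auto
    have "nb Y adj x \<subseteq> nb Y adj (H x (m - m))"
      using bspec[OF stiff_case[OF sym stiff HY Hm Hs, where j=m] x] .
    then have "x \<in> nb Y adj (p x)" using H0 x nb_refl[OF x] by auto
    then have "adjeq adj (p x) x" unfolding nb_def by auto
    then show ?thesis using x by auto
  next
    case False
    define Y' where "Y' = Y - S"
    have SY: "S \<subseteq> Y" unfolding S_def by auto
    have dom: "\<forall>v\<in>Y. \<exists>w\<in>Y'. nb Y adj v \<subseteq> nb Y adj w"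
    proof
      fix v assume "v \<in> Y"
      from exists_max_dom[OF fin this, of adj] obtain w where
        "w \<in> Y" "nb Y adj v \<subseteq> nb Y adj w" "\<forall>w'\<in>Y. \<not> nb Y adj w \<subset> nb Y adj w'" by blast
      then show "\<exists>w\<in>Y'. nb Y adj v \<subseteq> nb Y adj w" unfolding Y'_def S_def by blast
    qed
    define r where "r v = (if v \<in> Y' then v else SOME w. w \<in> Y' \<and> nb Y adj v \<subseteq> nb Y adj w)" for v
    have r: "r v \<in> Y' \<and> nb Y adj v \<subseteq> nb Y adj (r v)" if "v \<in> Y" for v
    proof (cases "v \<in> Y'")
      case True then show ?thesis unfolding r_def by auto
    next
      case False
      have "\<exists>w. w \<in> Y' \<and> nb Y adj v \<subseteq> nb Y adj w" using dom that by blast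
      from someI_ex[OF this] False show ?thesis unfolding r_def by auto
    qed
    have Y'Y: "Y' \<subseteq> Y" unfolding Y'_def by auto
    have rcont: "adjeq adj (r u) (r v)" if "u \<in> Y" "v \<in> Y" "adjeq adj u v" for u v
    proof -
      have "v \<in> nb Y adj u" using that unfolding nb_def by auto
      then have "adjeq adj (r u) v" using r[OF that(1)] unfolding nb_def by auto
      then have "r u \<in> nb Y adj v" using adjeq_sym[OF sym] r[OF that(1)] that Y'Y unfolding nb_def by blast
      then have "adjeq adj (r v) (r u)" using r[OF that(2)] unfolding nb_def by auto
      then show ?thesis using adjeq_sym[OF sym] r that Y'Y by blast
    qed
    have surj: "p ` Y = Y" using endo_inj_surj[OF fin _ inj] pY by auto
    have nbp: "nb Y adj (p z) = p ` nb Y adj z" if z: "z \<in> Y" for z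
    proof
      show "p ` nb Y adj z \<subseteq> nb Y adj (p z)"
        using padj pY z unfolding nb_def adjeq_def by auto
    next
      show "nb Y adj (p z) \<subseteq> p ` nb Y adj z"
      proof
        fix y assume y: "y \<in> nb Y adj (p z)"
        then obtain u where u: "u \<in> Y" "y = p u" using surj unfolding nb_def by auto
        have "adjeq adj (p z) (p u)" using y u unfolding nb_def by auto
        then have "adjeq adj z u" using padj inj z u unfolding adjeq_def inj_on_def by auto
        then show "y \<in> p ` nb Y adj z" using u unfolding nb_def by auto
      qed
    qed
    have pY': "\<forall>x\<in>Y'. p x \<in> Y'"
    proof (rule ballI, rule ccontr)
      fix x assume x: "x \<in> Y'" and np: "p x \<notin> Y'"
      have xY: "x \<in> Y" using x Y'Y by auto
      then have "p x \<in> S" using np pY unfolding Y'_def by auto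
      then obtain w where w: "w \<in> Y" "nb Y adj (p x) \<subset> nb Y adj w" unfolding S_def by auto
      obtain w0 where w0: "w0 \<in> Y" "w = p w0" using surj w(1) by auto
      have ps: "p ` nb Y adj x \<subset> p ` nb Y adj w0" using w w0 nbp xY by auto
      have sub: "nb Y adj x \<subseteq> nb Y adj w0"
      proof
        fix a assume a: "a \<in> nb Y adj x"
        then have "p a \<in> p ` nb Y adj w0" using ps by blast
        then obtain b where b: "b \<in> nb Y adj w0" "p a = p b" by auto
        have "a \<in> Y" "b \<in> Y" using a b unfolding nb_def by auto
        then have "a = b" using inj b(2) unfolding inj_on_def by blast
        then show "a \<in> nb Y adj w0" using b by simp
      qed
      have "nb Y adj x \<noteq> nb Y adj w0" using ps by auto
      then have "nb Y adj x \<subset> nb Y adj w0" using sub by auto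
      then have "x \<in> S" using xY w0 unfolding S_def by auto
      then show False using x unfolding Y'_def by auto
    qed
    have card: "card Y' < card Y"
      using False SY fin unfolding Y'_def by (intro psubset_card_mono) auto
    have neY': "Y' \<noteq> {}" using dom ne by auto
    have "\<exists>x\<in>Y'. adjeq adj (p x) x"
    proof (rule less.hyps[OF card, where H = "\<lambda>x t. r (H x t)"])
      show "finite Y'" using fin Y'Y finite_subset by blast
      show "Y' \<noteq> {}" by fact
      show "\<forall>x\<in>Y'. \<forall>y\<in>Y'. adj x y \<longrightarrow> adj y x" using sym Y'Y by blast
      show "\<forall>x\<in>Y'. p x \<in> Y'" by fact
      show "inj_on p Y'" using inj Y'Y inj_on_subset by blast
      show "\<forall>x\<in>Y'. \<forall>y\<in>Y'. adj (p x) (p y) = adj x y" using padj Y'Y by blast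
      show "\<forall>x\<in>Y'. \<forall>t\<le>m. r (H x t) \<in> Y'" using r HY Y'Y by blast
      show "\<forall>x\<in>Y'. r (H x 0) = p x" using H0 pY' Y'Y unfolding r_def by auto
      show "\<forall>x\<in>Y'. r (H x m) = x" using Hm Y'Y unfolding r_def by auto
      show "\<forall>x\<in>Y'. \<forall>x'\<in>Y'. \<forall>t\<le>m. \<forall>t'\<le>m. (x, t) \<noteq> (x', t') \<and> adjeq adj x x' \<and> t \<le> Suc t' \<and> t' \<le> Suc t \<longrightarrow>
          adjeq adj (r (H x t)) (r (H x' t'))"
      proof (intro ballI allI impI)
        fix x x' t t' assume a: "x \<in> Y'" "x' \<in> Y'" "t \<le> m" "t' \<le> m"
          "(x, t) \<noteq> (x', t') \<and> adjeq adj x x' \<and> t \<le> Suc t' \<and> t' \<le> Suc t"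
        have "x \<in> Y" "x' \<in> Y" using a Y'Y by auto
        then have "adjeq adj (H x t) (H x' t')" using Hs a by blast
        moreover have "H x t \<in> Y" "H x' t' \<in> Y" using HY a \<open>x \<in> Y\<close> \<open>x' \<in> Y\<close> by auto
        ultimately show "adjeq adj (r (H x t)) (r (H x' t'))" using rcont by blast
      qed
    qed
    then show ?thesis using Y'Y by auto
  qed
qed



lemma funpow_in: "\<forall>x\<in>X. f x \<in> X \<Longrightarrow> x \<in> X \<Longrightarrow> (f^^n) x \<in> X"
  by (induction n) auto

lemma idem_power:
  assumes fin: "finite X" and fX: "\<forall>x\<in>X. f x \<in> X"
  shows "\<exists>k\<ge>1. \<forall>x\<in>X. (f^^k) ((f^^k) x) = (f^^k) x"
proof -
  define g where "g n = restrict (f^^n) X" for n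
  have "range g \<subseteq> PiE X (\<lambda>_. X)" unfolding g_def using funpow_in[OF fX] by auto
  then have "finite (range g)" using finite_PiE[OF fin, of "\<lambda>_. X"] fin finite_subset by blast
  then have "\<not> inj g" using finite_imageD infinite_UNIV_nat by blast
  then obtain a0 b0 where ab0: "a0 \<noteq> b0" "g a0 = g b0" unfolding inj_def by blast
  obtain a b where ab: "a < b" "g a = g b"
    using ab0 by (metis linorder_neq_iff)
  have eqab: "(f^^a) x = (f^^b) x" if "x \<in> X" for x
    using fun_cong[OF ab(2), of x] that unfolding g_def by simp
  define d where "d = b - a"
  have d: "d \<ge> 1" "b = a + d" using ab unfolding d_def by auto
  have c1: "(f^^(n+a+d)) x = (f^^(n+a)) x" if "x \<in> X" for x n
  proof -
    have "(f^^(n+a+d)) x = (f^^n) ((f^^b) x)" using d by (simp add: funpow_add add.assoc)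
    also have "\<dots> = (f^^n) ((f^^a) x)" using eqab[OF that] by simp
    also have "\<dots> = (f^^(n+a)) x" by (simp add: funpow_add)
    finally show ?thesis .
  qed
  have c2: "(f^^(n+a+i*d)) x = (f^^(n+a)) x" if "x \<in> X" for x n i
  proof (induction i)
    case 0 then show ?case by simp
  next
    case (Suc i)
    have "(f^^(n+a+Suc i*d)) x = (f^^((n + i*d)+a+d)) x" by (simp add: algebra_simps)
    also have "\<dots> = (f^^((n+i*d)+a)) x" using c1[OF that] .
    also have "\<dots> = (f^^(n+a+i*d)) x" by (simp add: algebra_simps)
    finally show ?case using Suc by simp
  qed
  define k where "k = (a+1)*d"
  have k1: "k \<ge> 1" unfolding k_def using d by simp
  have "(a+1)*1 \<le> (a+1)*d" using d by (intro mult_le_mono2)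
  then have ka: "k \<ge> a" unfolding k_def by simp
  have "(f^^k) ((f^^k) x) = (f^^k) x" if "x \<in> X" for x
  proof -
    have "(f^^k) ((f^^k) x) = (f^^((k-a)+a+(a+1)*d)) x" using ka by (simp add: funpow_add k_def)
    also have "\<dots> = (f^^((k-a)+a)) x" using c2[OF that] .
    also have "\<dots> = (f^^k) x" using ka by simp
    finally show ?thesis .
  qed
  then show ?thesis using k1 by blast
qed

lemma funpow_cont:
  assumes "\<forall>x\<in>X. f x \<in> X" "\<forall>x\<in>X. \<forall>y\<in>X. adj x y \<longrightarrow> adjeq adj (f x) (f y)"
  shows "x \<in> X \<Longrightarrow> y \<in> X \<Longrightarrow> adjeq adj x y \<Longrightarrow> adjeq adj ((f^^n) x) ((f^^n) y)"
proof (induction n)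
  case 0 then show ?case by simp
next
  case (Suc n)
  have "(f^^n) x \<in> X" "(f^^n) y \<in> X" using funpow_in[OF assms(1)] Suc.prems by auto
  then show ?case using Suc assms(2) unfolding adjeq_def by auto
qed

lemma main_part:
  fixes X :: "'a set" and adj :: "'a \<Rightarrow> 'a \<Rightarrow> bool" and f :: "'a \<Rightarrow> 'a"
  assumes di: "digital_image X adj"
    and fin: "finite X" and ne: "X \<noteq> {}"
    and cont: "digitally_continuous X adj X adj f"
    and hom: "strongly_homotopic X adj X adj f id"
  shows "(\<exists>x\<in>X. f x = x) \<or>
         (\<exists>x\<in>X. \<exists>y\<in>X. x \<noteq> y \<and> approx_fixed_point adj f x \<and> approx_fixed_point adj f y)"
proof -
  have sym: "\<forall>x\<in>X. \<forall>y\<in>X. adj x y \<longrightarrow> adj y x" and irr: "\<forall>x\<in>X. \<not> adj x x"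
    using di unfolding digital_image_def by auto
  have fX: "\<forall>x\<in>X. f x \<in> X" and fc: "\<forall>x\<in>X. \<forall>y\<in>X. adj x y \<longrightarrow> adjeq adj (f x) (f y)"
    using cont unfolding digitally_continuous_def by auto
  obtain m H where HX: "\<forall>x\<in>X. \<forall>t\<le>m. H x t \<in> X"
    and H0m: "\<forall>x\<in>X. H x 0 = f x \<and> H x m = id x"
    and Hs: "\<forall>x\<in>X. \<forall>x'\<in>X. \<forall>t\<le>m. \<forall>t'\<le>m.
            (x, t) \<noteq> (x', t') \<and> adjeq adj x x' \<and> t \<le> Suc t' \<and> t' \<le> Suc t
            \<longrightarrow> adjeq adj (H x t) (H x' t')"
    using hom unfolding strongly_homotopic_def by blast
  obtain k where k: "k \<ge> 1" "\<forall>x\<in>X. (f^^k) ((f^^k) x) = (f^^k) x"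
    using idem_power[OF fin fX] by blast
  define e where "e = f^^k"
  define Y where "Y = e ` X"
  have eX: "e x \<in> X" if "x \<in> X" for x unfolding e_def using funpow_in[OF fX that] .
  have YX: "Y \<subseteq> X" unfolding Y_def using eX by auto
  have eY: "e y = y" if "y \<in> Y" for y using that k(2) unfolding Y_def e_def by auto
  have econt: "adjeq adj (e x) (e y)" if "x \<in> X" "y \<in> X" "adjeq adj x y" for x y
    unfolding e_def using funpow_cont[OF fX fc that] .
  have fY: "\<forall>y\<in>Y. f y \<in> Y"
  proof
    fix y assume "y \<in> Y"
    then obtain x where x: "x \<in> X" "y = e x" unfolding Y_def by auto
    have "f y = e (f x)" unfolding x(2) e_def by (simp add: funpow_swap1)
    then show "f y \<in> Y" unfolding Y_def using fX x by auto
  qed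
  have fk1: "(f^^(k-1)) (f y) = y" if "y \<in> Y" for y
  proof -
    have kk: "k = Suc (k-1)" using k(1) by simp
    have "(f^^(k-1)) (f y) = (f^^(Suc (k-1))) y" by (simp only: funpow_Suc_right o_apply)
    then have "(f^^(k-1)) (f y) = (f^^k) y" using kk by simp
    then show ?thesis using eY[OF that] unfolding e_def by simp
  qed
  have inj: "inj_on f Y"
  proof (rule inj_onI)
    fix x y assume "x \<in> Y" "y \<in> Y" "f x = f y"
    then show "x = y" using fk1[of x] fk1[of y] by simp
  qed
  have padj: "\<forall>x\<in>Y. \<forall>y\<in>Y. adj (f x) (f y) \<longleftrightarrow> adj x y"
  proof (intro ballI iffI)
    fix x y assume xy: "x \<in> Y" "y \<in> Y" "adj (f x) (f y)"
    have "f x \<in> X" "f y \<in> X" using fY xy YX by auto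
    then have ne: "f x \<noteq> f y" using irr xy by auto
    have "adjeq adj ((f^^(k-1)) (f x)) ((f^^(k-1)) (f y))"
      using funpow_cont[OF fX fc \<open>f x \<in> X\<close> \<open>f y \<in> X\<close>] xy unfolding adjeq_def by auto
    then show "adj x y" using fk1 xy ne unfolding adjeq_def by auto
  next
    fix x y assume xy: "x \<in> Y" "y \<in> Y" "adj x y"
    then have "x \<noteq> y" using irr YX by auto
    then have "f x \<noteq> f y" using inj xy unfolding inj_on_def by auto
    moreover have "adjeq adj (f x) (f y)" using fc xy YX by auto
    ultimately show "adj (f x) (f y)" unfolding adjeq_def by auto
  qed
  have "\<exists>x\<in>Y. adjeq adj (f x) x"
  proof (rule autom_approx[where H = "\<lambda>x t. e (H x t)" and m = m])
    show "finite Y" unfolding Y_def using fin by simp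
    show "Y \<noteq> {}" unfolding Y_def using ne by simp
    show "\<forall>x\<in>Y. \<forall>y\<in>Y. adj x y \<longrightarrow> adj y x" using sym YX by blast
    show "\<forall>x\<in>Y. f x \<in> Y" by fact
    show "inj_on f Y" by fact
    show "\<forall>x\<in>Y. \<forall>y\<in>Y. adj (f x) (f y) = adj x y" by fact
    show "\<forall>x\<in>Y. \<forall>t\<le>m. e (H x t) \<in> Y"
    proof (intro ballI allI impI)
      fix x t assume "x \<in> Y" "t \<le> m"
      then have "H x t \<in> X" using HX YX by blast
      then show "e (H x t) \<in> Y" unfolding Y_def by (rule imageI)
    qed
    show "\<forall>x\<in>Y. e (H x 0) = f x"
    proof
      fix x assume x: "x \<in> Y"
      then have "H x 0 = f x" using H0m YX by blast
      then show "e (H x 0) = f x" using eY fY x by simp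
    qed
    show "\<forall>x\<in>Y. e (H x m) = x"
    proof
      fix x assume x: "x \<in> Y"
      then have "H x m = x" using H0m YX by fastforce
      then show "e (H x m) = x" using eY x by simp
    qed
    show "\<forall>x\<in>Y. \<forall>x'\<in>Y. \<forall>t\<le>m. \<forall>t'\<le>m. (x, t) \<noteq> (x', t') \<and> adjeq adj x x' \<and> t \<le> Suc t' \<and> t' \<le> Suc t \<longrightarrow>
          adjeq adj (e (H x t)) (e (H x' t'))"
    proof (intro ballI allI impI)
      fix x x' t t' assume a: "x \<in> Y" "x' \<in> Y" "t \<le> m" "t' \<le> m"
        "(x, t) \<noteq> (x', t') \<and> adjeq adj x x' \<and> t \<le> Suc t' \<and> t' \<le> Suc t"
      have "x \<in> X" "x' \<in> X" using a YX by auto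
      have "adjeq adj (H x t) (H x' t')" using Hs[rule_format, OF \<open>x \<in> X\<close> \<open>x' \<in> X\<close> a(3) a(4) a(5)] .
      moreover have "H x t \<in> X" "H x' t' \<in> X" using HX a(3,4) \<open>x \<in> X\<close> \<open>x' \<in> X\<close> by auto
      ultimately show "adjeq adj (e (H x t)) (e (H x' t'))" using econt by blast
    qed
  qed
  then obtain y where y: "y \<in> Y" "adjeq adj (f y) y" by blast
  have yX: "y \<in> X" using y YX by auto
  show ?thesis
  proof (cases "f y = y")
    case True then show ?thesis using yX by blast
  next
    case False
    then have a: "adj (f y) y" using y unfolding adjeq_def by auto
    have fyX: "f y \<in> X" using fX yX by auto
    have "adj y (f y)" using sym a yX fyX by blast
    then have "adjeq adj (f y) (f (f y))" using fc yX fyX by blast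
    then have "adjeq adj (f (f y)) (f y)" using adjeq_sym[OF sym] fyX fX by blast
    then show ?thesis using False yX fyX y unfolding approx_fixed_point_def by blast
  qed
qed



lemma trivial_rank:
  fixes G :: "('g, 'm) monoid_scheme"
  assumes c: "carrier G = {\<one>\<^bsub>G\<^esub>}" and m: "\<one>\<^bsub>G\<^esub> \<otimes>\<^bsub>G\<^esub> \<one>\<^bsub>G\<^esub> = \<one>\<^bsub>G\<^esub>"
  shows "ab_rank G = 0"
proof -
  have cg: "comm_group G"
    by (rule comm_groupI) (use c m in auto)
  interpret comm_group G by (rule cg)
  have "{card S | S. ab_independent G S} = {0}"
  proof (intro equalityI subsetI)
    fix k assume "k \<in> {card S | S. ab_independent G S}"
    then obtain S where S: "k = card S" "ab_independent G S" by auto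
    have sub: "S \<subseteq> {\<one>\<^bsub>G\<^esub>}" using S(2) c unfolding ab_independent_def by auto
    have "S = {}"
    proof (rule ccontr)
      assume "S \<noteq> {}"
      then have S1: "S = {\<one>\<^bsub>G\<^esub>}" using sub by auto
      define n :: "'g \<Rightarrow> int" where "n = (\<lambda>_. 1)"
      have "finprod G (\<lambda>x. x [^]\<^bsub>G\<^esub> n x) S \<in> carrier G"
        by (rule finprod_closed) (use S1 in auto)
      then have "finprod G (\<lambda>x. x [^]\<^bsub>G\<^esub> n x) S = \<one>\<^bsub>G\<^esub>" using c by auto
      then have "\<forall>x\<in>S. n x = 0" using S(2) unfolding ab_independent_def by blast
      then show False using S1 unfolding n_def by auto
    qed
    then show "k \<in> {0}" using S by simp
  next
    fix k assume "k \<in> {0::nat}"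
    moreover have "ab_independent G {}" unfolding ab_independent_def by simp
    ultimately show "k \<in> {card S | S. ab_independent G S}" by force
  qed
  then show ?thesis unfolding ab_rank_def by simp
qed

lemma osimplices_empty: "osimplices {} adj q = {}"
  unfolding osimplices_def by auto

lemma carrier_F: "carrier (free_chains {} adj q) = {0}"
  unfolding free_chains_def osimplices_empty by auto

lemma O_empty: "orient_subgroup {} adj q = {0}"
proof -
  have "orient_rels {} adj q = {}" unfolding orient_rels_def osimplices_empty by auto
  then show ?thesis unfolding orient_subgroup_def free_chains_def
    using group.generate_empty[OF group_free_Abelian_group] by simp
qed

lemma coset00: "{0::'b list \<Rightarrow>\<^sub>0 int} #>\<^bsub>free_chains {} adj q\<^esub> 0 = {0}"
  unfolding r_coset_def free_chains_def by simp

lemma carrier_C: "carrier (chain_group {} adj q) = {{0}}"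
  unfolding chain_group_def FactGroup_def RCOSETS_def O_empty
  by (simp add: carrier_F coset00)

lemma one_C: "\<one>\<^bsub>chain_group {} adj q\<^esub> = {0}"
  unfolding chain_group_def FactGroup_def O_empty by simp

lemma mult_C: "{0} \<otimes>\<^bsub>chain_group {} adj q\<^esub> {0} = {0::'b list \<Rightarrow>\<^sub>0 int}"
  unfolding chain_group_def FactGroup_def set_mult_def free_chains_def by simp


lemma euler_empty: "simplicial_euler_char {} adj = 0"
proof -
  define C where "C = chain_group ({}::'a set) adj 0"
  define SG where "SG = subgroup_generated C (cycles {} adj 0)"
  have cyc: "cycles {} adj 0 = {{0}}" unfolding cycles_def using carrier_C by simp
  have carrierSG: "carrier SG = {{0}}"
  proof -
    have "carrier SG = generate C {{0}}" unfolding SG_def carrier_subgroup_generated cyc C_def carrier_C by simp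
    also have "\<dots> = {{0}}"
    proof
      show "generate C {{0}} \<subseteq> {{0}}"
      proof
        fix x assume "x \<in> generate C {{0}}"
        then show "x \<in> {{0}}"
        proof (induction rule: generate.induct)
          case one then show ?case unfolding C_def one_C by simp
        next
          case (incl h) then show ?case by simp
        next
          case (inv h)
          then have "h = {0}" by simp
          have "inv\<^bsub>C\<^esub> {0} = {0}" unfolding m_inv_def C_def carrier_C one_C
            using mult_C by (auto intro!: the_equality)
          then show ?case using \<open>h = {0}\<close> by simp
        next
          case (eng h1 h2)
          then show ?case unfolding C_def using mult_C by simp
        qed
      qed
      show "{{0}} \<subseteq> generate C {{0}}" using generate.incl[of "{0}" "{{0}}" C] by simp
    qed
    finally show ?thesis .
  qed
  have B: "boundaries {} adj 0 = {{0}}"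
  proof -
    have s0: "(SOME c. c \<in> {0::'a list \<Rightarrow>\<^sub>0 int}) = 0" by (rule some_equality) simp_all
    have fb: "free_boundary (Suc 0) (0::'a list \<Rightarrow>\<^sub>0 int) = 0" unfolding free_boundary_def by simp
    have "chain_boundary {} adj 0 {0} = {0}"
      unfolding chain_boundary_def O_empty s0 fb by (rule coset00)
    then show ?thesis unfolding boundaries_def carrier_C by simp
  qed
  have multSG: "{0} \<otimes>\<^bsub>SG\<^esub> {0} = {0::'a list \<Rightarrow>\<^sub>0 int}"
    unfolding SG_def subgroup_generated_def C_def using mult_C by simp
  define Hm where "Hm = simplicial_homology ({}::'a set) adj 0"
  have cH: "carrier Hm = {{{0}}}"
    unfolding Hm_def simplicial_homology_def FactGroup_def RCOSETS_def r_coset_def B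
    using carrierSG multSG unfolding SG_def C_def by simp
  have oH: "\<one>\<^bsub>Hm\<^esub> = {{0}}"
    unfolding Hm_def simplicial_homology_def FactGroup_def B by simp
  have mH: "\<one>\<^bsub>Hm\<^esub> \<otimes>\<^bsub>Hm\<^esub> \<one>\<^bsub>Hm\<^esub> = \<one>\<^bsub>Hm\<^esub>"
    unfolding oH unfolding Hm_def simplicial_homology_def FactGroup_def set_mult_def
    using multSG unfolding SG_def C_def by simp
  have "ab_rank Hm = 0" by (rule trivial_rank) (use cH oH mH in auto)
  then show ?thesis unfolding simplicial_euler_char_def Hm_def by simp
qed

theorem theorem3p6:
  fixes X :: "'a set" and adj :: "'a \<Rightarrow> 'a \<Rightarrow> bool" and f :: "'a \<Rightarrow> 'a"
  assumes "digital_image X adj"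
    and "finite X"
    and "simplicial_euler_char X adj \<noteq> 0"
    and "digitally_continuous X adj X adj f"
    and "strongly_homotopic X adj X adj f id"
  shows "(\<exists>x\<in>X. f x = x) \<or>
         (\<exists>x\<in>X. \<exists>y\<in>X. x \<noteq> y \<and> approx_fixed_point adj f x \<and> approx_fixed_point adj f y)"
proof -
  have "X \<noteq> {}" using assms(3) euler_empty by auto
  then show ?thesis using main_part[OF assms(1,2) _ assms(4,5)] by blast
qed

end
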